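(* Let $f:\mathbf U\to\mathbf V$ be a map in the set-up, and let $\mathcal D(f)=\bigcup_{k\ge0}\mathcal D_k(f)$ be the layered decomposition of the set of equivalence classes of critical points described in the context. Then: (P1) there is an integer $M\ge0$ such that $\mathcal D(f)=\bigsqcup_{k=0}^M\mathcal D_k(f)$; (P2) for every $k\ge0$ and $[c_1],[c_2]\in\mathcal D_k(f)$ with $[c_1]\ne[c_2]$, we have $[c_1]\not\to[c_2]$ and $[c_2]\not\to[c_1]$; (P3) if $[c_1]\in\mathcal D_s(f)$ and $[c_2]\in\mathcal D_t(f)$ with $s<t$, then $[c_1]\not\to[c_2]$; (P4) for every $k\ge1$, every $[c]\in\mathcal D_k(f)$ accumulates to some element of $\mathcal D_{k-1}(f)$.
   Context: A map in the set-up: $\mathbf V$ is a disjoint union of finitely many Jordan domains in $\mathbb C$ with pairwise disjoint quasicircle boundaries; $\mathbf U$ is compactly contained in $\mathbf V$ and is a union of finitely many Jordan domains with pairwise disjoint closures; $f:\mathbf U\to\mathbf V$ is a proper holomorphic map all of whose critical points (set $\mathrm{Crit}(f)$) lie in $\mathcal K_f:=\{z\in\mathbf U: f^n(z)\in\mathbf U\ \forall n\ge0\}$, and each component of $\mathbf V$ contains at most one component of $\mathcal K_f$ containing critical points. Puzzle pieces of depth $n$ are components of $f^{-n}(\mathbf V)$; $P_n(x)$ is the depth-$n$ piece containing $x\in\mathcal K_f$. For $x,y\in\mathcal K_f$, $x\to y$ means: for every $n\ge0$ there is $j\ge1$ with $f^j(x)\in P_n(y)$. On $\mathrm{Crit}(f)$: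 $c_1\sim c_2$ iff $c_1=c_2$ or ($c_1\to c_2$ and $c_2\to c_1$); $[c]$ is the class of $c$ and $\mathcal D(f)=\mathrm{Crit}(f)/\sim$. $[c_1]\to[c_2]$ ("$[c_1]$ accumulates to $[c_2]$") iff there exist $c_1'\in[c_1]$, $c_2'\in[c_2]$ with $c_1'\to c_2'$. Partial order: $[c_1]\le[c_2]$ iff $[c_1]=[c_2]$ or $[c_2]\to[c_1]$. $\mathcal D_0(f)$ is the set of $[c]\in\mathcal D(f)$ that do not accumulate to any element of $\mathcal D(f)\setminus\{[c]\}$; inductively, $\mathcal D_{k+1}(f)$ is the set of elements minimal with respect to $\le$ in $\mathcal D(f)\setminus(\mathcal D_0(f)\cup\dots\cup\mathcal D_k(f))$. *)

theory Defs
  imports "HOL-Analysis.Analysis"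
begin

definition qc_Lmax :: "(complex \<Rightarrow> complex) \<Rightarrow> complex \<Rightarrow> real \<Rightarrow> real" where
  "qc_Lmax \<phi> x r = Sup ((\<lambda>z. cmod (\<phi> z - \<phi> x)) ` sphere x r)"

definition qc_lmin :: "(complex \<Rightarrow> complex) \<Rightarrow> complex \<Rightarrow> real \<Rightarrow> real" where
  "qc_lmin \<phi> x r = Inf ((\<lambda>z. cmod (\<phi> z - \<phi> x)) ` sphere x r)"

definition quasiconformal_plane :: "(complex \<Rightarrow> complex) \<Rightarrow> bool" where
  "quasiconformal_plane \<phi> \<longleftrightarrow>
     (\<exists>\<psi>. homeomorphism UNIV UNIV \<phi> \<psi>) \<and>
     (\<exists>H::real. \<forall>x. Limsup (at_right 0) (\<lambda>r. ereal (qc_Lmax \<phi> x r / qc_lmin \<phi> x r)) \<le> ereal H)"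

definition quasicircle :: "complex set \<Rightarrow> bool" where
  "quasicircle \<Gamma> \<longleftrightarrow> (\<exists>\<phi>. quasiconformal_plane \<phi> \<and> \<Gamma> = \<phi> ` sphere 0 1)"

definition jordan_domain :: "complex set \<Rightarrow> bool" where
  "jordan_domain D \<longleftrightarrow> (\<exists>\<gamma>. simple_path \<gamma> \<and> pathfinish \<gamma> = pathstart \<gamma> \<and> D = inside (path_image \<gamma>))"

definition filled_set :: "(complex \<Rightarrow> complex) \<Rightarrow> complex set \<Rightarrow> complex set" where
  "filled_set f U = {z \<in> U. \<forall>n. (f ^^ n) z \<in> U}"

definition crit :: "(complex \<Rightarrow> complex) \<Rightarrow> complex set \<Rightarrow> complex set" where
  "crit f U = {z \<in> U. deriv f z = 0}"

definition setup_map ::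
  "(complex \<Rightarrow> complex) \<Rightarrow> complex set set \<Rightarrow> complex set set \<Rightarrow> bool" where
  "setup_map f \<U> \<V> \<longleftrightarrow>
     finite \<V> \<and> (\<forall>D\<in>\<V>. jordan_domain D \<and> quasicircle (frontier D)) \<and>
     (\<forall>D\<in>\<V>. \<forall>D'\<in>\<V>. D \<noteq> D' \<longrightarrow> D \<inter> D' = {} \<and> frontier D \<inter> frontier D' = {}) \<and>
     finite \<U> \<and> (\<forall>D\<in>\<U>. jordan_domain D) \<and>
     (\<forall>D\<in>\<U>. \<forall>D'\<in>\<U>. D \<noteq> D' \<longrightarrow> closure D \<inter> closure D' = {}) \<and>
     compact (closure (\<Union>\<U>)) \<and> closure (\<Union>\<U>) \<subseteq> \<Union>\<V> \<and>
     f holomorphic_on (\<Union>\<U>) \<and> f ` (\<Union>\<U>) \<subseteq> \<Union>\<V> \<and>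
     (\<forall>K. K \<subseteq> \<Union>\<V> \<and> compact K \<longrightarrow> compact {z \<in> \<Union>\<U>. f z \<in> K}) \<and>
     crit f (\<Union>\<U>) \<subseteq> filled_set f (\<Union>\<U>) \<and>
     (\<forall>D\<in>\<V>. \<forall>c1\<in>crit f (\<Union>\<U>). \<forall>c2\<in>crit f (\<Union>\<U>). c1 \<in> D \<and> c2 \<in> D \<longrightarrow>
        connected_component_set (filled_set f (\<Union>\<U>)) c1 =
        connected_component_set (filled_set f (\<Union>\<U>)) c2)"

text \<open>f^{-n}(V): points where f^n is defined (iterates stay in U) and lands in V.\<close>
definition depth_set :: "(complex \<Rightarrow> complex) \<Rightarrow> complex set \<Rightarrow> complex set \<Rightarrow> nat \<Rightarrow> complex set" where
  "depth_set f U V n = {z. (\<forall>i<n. (f ^^ i) z \<in> U) \<and> (f ^^ n) z \<in> V}"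

definition piece :: "(complex \<Rightarrow> complex) \<Rightarrow> complex set \<Rightarrow> complex set \<Rightarrow> nat \<Rightarrow> complex \<Rightarrow> complex set" where
  "piece f U V n x = connected_component_set (depth_set f U V n) x"

definition acc :: "(complex \<Rightarrow> complex) \<Rightarrow> complex set \<Rightarrow> complex set \<Rightarrow> complex \<Rightarrow> complex \<Rightarrow> bool" where
  "acc f U V x y \<longleftrightarrow> (\<forall>n. \<exists>j\<ge>1. (f ^^ j) x \<in> piece f U V n y)"

definition crit_sim :: "(complex \<Rightarrow> complex) \<Rightarrow> complex set \<Rightarrow> complex set \<Rightarrow> complex \<Rightarrow> complex \<Rightarrow> bool" where
  "crit_sim f U V c1 c2 \<longleftrightarrow> c1 = c2 \<or> (acc f U V c1 c2 \<and> acc f U V c2 c1)"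

definition crit_class :: "(complex \<Rightarrow> complex) \<Rightarrow> complex set \<Rightarrow> complex set \<Rightarrow> complex \<Rightarrow> complex set" where
  "crit_class f U V c = {c' \<in> crit f U. crit_sim f U V c c'}"

definition classes :: "(complex \<Rightarrow> complex) \<Rightarrow> complex set \<Rightarrow> complex set \<Rightarrow> complex set set" where
  "classes f U V = crit_class f U V ` crit f U"

definition cls_acc :: "(complex \<Rightarrow> complex) \<Rightarrow> complex set \<Rightarrow> complex set \<Rightarrow> complex set \<Rightarrow> complex set \<Rightarrow> bool" where
  "cls_acc f U V A B \<longleftrightarrow> (\<exists>a\<in>A. \<exists>b\<in>B. acc f U V a b)"

definition cls_le :: "(complex \<Rightarrow> complex) \<Rightarrow> complex set \<Rightarrow> complex set \<Rightarrow> complex set \<Rightarrow> complex set \<Rightarrow> bool" where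
  "cls_le f U V A B \<longleftrightarrow> A = B \<or> cls_acc f U V B A"

definition layer0 :: "(complex \<Rightarrow> complex) \<Rightarrow> complex set \<Rightarrow> complex set \<Rightarrow> complex set set" where
  "layer0 f U V = {A \<in> classes f U V. \<forall>B \<in> classes f U V - {A}. \<not> cls_acc f U V A B}"

definition minimal_in :: "(complex \<Rightarrow> complex) \<Rightarrow> complex set \<Rightarrow> complex set \<Rightarrow> complex set set \<Rightarrow> complex set set" where
  "minimal_in f U V R = {A \<in> R. \<forall>B \<in> R. cls_le f U V B A \<longrightarrow> B = A}"

primrec layers_upto :: "(complex \<Rightarrow> complex) \<Rightarrow> complex set \<Rightarrow> complex set \<Rightarrow> nat \<Rightarrow> complex set set" where
  "layers_upto f U V 0 = layer0 f U V"
| "layers_upto f U V (Suc k) = layers_upto f U V k \<union> minimal_in f U V (classes f U V - layers_upto f U V k)"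

definition layer :: "(complex \<Rightarrow> complex) \<Rightarrow> complex set \<Rightarrow> complex set \<Rightarrow> nat \<Rightarrow> complex set set" where
  "layer f U V k = (case k of 0 \<Rightarrow> layer0 f U V
                     | Suc j \<Rightarrow> minimal_in f U V (classes f U V - layers_upto f U V j))"

end

theory Submission
  imports Defs "HOL-Complex_Analysis.Complex_Analysis"
begin


lemma jd_open: "jordan_domain D \<Longrightarrow> open D \<and> bounded D"
  unfolding jordan_domain_def
  by (metis bounded_inside compact_imp_bounded compact_imp_closed compact_path_image open_inside simple_path_imp_path)

lemma islimpt_open_int:
  assumes h: "p islimpt T" "open S" "p \<in> S"
  shows "p islimpt (T \<inter> S)"
  unfolding islimpt_def
proof (intro allI impI)
  fix W assume w: "p \<in> W" "open W"
  have "p \<in> W \<inter> S" "open (W \<inter> S)" using w h by auto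
  then obtain y where "y \<in> T" "y \<in> W \<inter> S" "y \<noteq> p"
    using h(1) unfolding islimpt_def by blast
  thus "\<exists>y\<in>T \<inter> S. y \<in> W \<and> y \<noteq> p" by blast
qed

lemma sm_jdU: "setup_map f \<U> \<V> \<Longrightarrow> D \<in> \<U> \<Longrightarrow> jordan_domain D"
  by (simp add: setup_map_def)
lemma sm_disj: "setup_map f \<U> \<V> \<Longrightarrow> D \<in> \<U> \<Longrightarrow> D' \<in> \<U> \<Longrightarrow> D \<noteq> D' \<Longrightarrow> closure D \<inter> closure D' = {}"
  by (simp add: setup_map_def)
lemma sm_cpt: "setup_map f \<U> \<V> \<Longrightarrow> compact (closure (\<Union>\<U>))"
  by (simp add: setup_map_def)
lemma sm_sub: "setup_map f \<U> \<V> \<Longrightarrow> closure (\<Union>\<U>) \<subseteq> \<Union>\<V>"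
  by (simp add: setup_map_def)
lemma sm_hol: "setup_map f \<U> \<V> \<Longrightarrow> f holomorphic_on (\<Union>\<U>)"
  by (simp add: setup_map_def)
lemma sm_img: "setup_map f \<U> \<V> \<Longrightarrow> f ` (\<Union>\<U>) \<subseteq> \<Union>\<V>"
  by (simp add: setup_map_def)
lemma sm_proper: "setup_map f \<U> \<V> \<Longrightarrow> K \<subseteq> \<Union>\<V> \<Longrightarrow> compact K \<Longrightarrow> compact {z \<in> \<Union>\<U>. f z \<in> K}"
  by (simp add: setup_map_def)
lemma sm_crit: "setup_map f \<U> \<V> \<Longrightarrow> crit f (\<Union>\<U>) \<subseteq> filled_set f (\<Union>\<U>)"
  by (simp add: setup_map_def)

lemma crit_finite:
  assumes sm: "setup_map f \<U> \<V>"
  shows "finite (crit f (\<Union>\<U>))"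
proof (rule ccontr)
  let ?U = "\<Union>\<U>" and ?V = "\<Union>\<V>"
  assume inf: "infinite (crit f ?U)"
  have hol: "f holomorphic_on ?U" by (rule sm_hol[OF sm])
  define C where "C = {z \<in> ?U. f z \<in> closure ?U}"
  have "compact C" unfolding C_def by (rule sm_proper[OF sm sm_sub[OF sm] sm_cpt[OF sm]])
  have critC: "crit f ?U \<subseteq> C"
  proof
    fix z assume "z \<in> crit f ?U"
    hence "z \<in> filled_set f ?U" using sm_crit[OF sm] by blast
    hence "z \<in> ?U" "(f ^^ 1) z \<in> ?U" unfolding filled_set_def by blast+
    thus "z \<in> C" unfolding C_def using closure_subset[of ?U] by auto
  qed
  have "\<exists>x\<in>C. x islimpt crit f ?U"
    using \<open>compact C\<close>[unfolded compact_eq_Bolzano_Weierstrass] inf critC by blast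
  then obtain p where "p \<in> C" and plim: "p islimpt crit f ?U" by blast
  then obtain D where D: "D \<in> \<U>" "p \<in> D" unfolding C_def by blast
  have oD: "open D" "bounded D" using jd_open[OF sm_jdU[OF sm D(1)]] by auto
  define S where "S = connected_component_set D p"
  have oS: "open S" "connected S" "p \<in> S" "S \<subseteq> D"
    unfolding S_def using oD D by (auto simp: open_connected_component connected_component_refl
      connected_component_subset)
  have SU: "S \<subseteq> ?U" using oS D by blast
  have holS: "f holomorphic_on S" using hol SU holomorphic_on_subset by blast
  have dz: "deriv f w = 0" if "w \<in> S" for w
  proof (rule analytic_continuation[of "deriv f" S "crit f ?U \<inter> S" p])
    show "deriv f holomorphic_on S" using holS oS by (simp add: holomorphic_deriv)
    show "p islimpt crit f ?U \<inter> S" using islimpt_open_int[OF plim oS(1) oS(3)] .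
    show "\<And>z. z \<in> crit f ?U \<inter> S \<Longrightarrow> deriv f z = 0" unfolding crit_def by blast
  qed (use oS that in auto)
  have "f constant_on S"
  proof (rule has_field_derivative_0_imp_constant_on)
    fix z assume "z \<in> S"
    hence "f field_differentiable at z" using holS oS
      by (meson holomorphic_on_imp_differentiable_at)
    thus "(f has_field_derivative 0) (at z)" using dz[OF \<open>z \<in> S\<close>]
      by (metis DERIV_deriv_iff_field_differentiable)
  qed (use oS in auto)
  then obtain w where w: "\<And>z. z \<in> S \<Longrightarrow> f z = w" unfolding constant_on_def by blast
  have "f p \<in> ?V" using sm_img[OF sm] oS SU by blast
  hence "w \<in> ?V" using w[OF \<open>p \<in> S\<close>] by simp
  hence "compact {z \<in> ?U. f z \<in> {w}}" by (intro sm_proper[OF sm]) auto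
  hence cl: "closed {z \<in> ?U. f z \<in> {w}}" by (rule compact_imp_closed)
  have "S \<subseteq> {z \<in> ?U. f z \<in> {w}}" using w SU by auto
  hence clS: "closure S \<subseteq> {z \<in> ?U. f z \<in> {w}}" using cl closure_minimal by blast
  have "bounded S" using oD oS bounded_subset by blast
  hence "S \<noteq> UNIV" using not_bounded_UNIV by auto
  then obtain q where q: "q \<in> frontier S" using frontier_not_empty oS by blast
  hence qD: "q \<in> frontier D" using frontier_of_connected_component_subset S_def by blast
  have "q \<in> closure S" using q unfolding frontier_def by blast
  hence "q \<in> ?U" using clS by blast
  then obtain D' where D': "D' \<in> \<U>" "q \<in> D'" by blast
  have qcD: "q \<in> closure D" "q \<notin> interior D" using qD unfolding frontier_def by auto
  show False
  proof (cases "D' = D")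
    case True thus ?thesis using qcD D' oD interior_open by metis
  next
    case False
    hence "closure D \<inter> closure D' = {}" using sm_disj[OF sm D(1) D'(1)] by blast
    thus ?thesis using qcD(1) D'(2) closure_subset[of D'] by blast
  qed
qed

lemma iter_cont: "f holomorphic_on U \<Longrightarrow> continuous_on {z. \<forall>i<m. (f ^^ i) z \<in> U} (f ^^ m)"
proof (induction m)
  case 0 thus ?case by (simp add: continuous_on_id)
next
  case (Suc m)
  have c1: "continuous_on {z. \<forall>i<Suc m. (f ^^ i) z \<in> U} (f ^^ m)"
    by (rule continuous_on_subset[OF Suc.IH[OF Suc.prems]]) auto
  have "continuous_on {z. \<forall>i<Suc m. (f ^^ i) z \<in> U} (\<lambda>x. f ((f ^^ m) x))"
    by (rule continuous_on_compose2[OF holomorphic_on_imp_continuous_on[OF Suc.prems] c1]) auto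
  thus ?case by (simp add: comp_def)
qed

lemma depth_shift: "z \<in> depth_set f U V (n + i) \<Longrightarrow> (f ^^ i) z \<in> depth_set f U V n"
proof -
  have e: "\<And>k. (f ^^ k) ((f ^^ i) z) = (f ^^ (k + i)) z" by (simp add: funpow_add)
  assume "z \<in> depth_set f U V (n + i)"
  thus ?thesis unfolding depth_set_def by (simp add: e add.commute)
qed

lemma piece_map:
  assumes hol: "f holomorphic_on U" and y: "y \<in> depth_set f U V (n + i)"
  shows "(f ^^ i) ` piece f U V (n + i) y \<subseteq> piece f U V n ((f ^^ i) y)"
proof -
  let ?P = "piece f U V (n + i) y"
  have sub: "?P \<subseteq> {z. \<forall>j<i. (f ^^ j) z \<in> U}"
    unfolding piece_def depth_set_def using connected_component_subset by fastforce
  have conn: "connected ((f ^^ i) ` ?P)"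
    by (rule connected_continuous_image[OF continuous_on_subset[OF iter_cont[OF hol] sub]])
      (simp add: piece_def connected_connected_component)
  have mem: "(f ^^ i) y \<in> (f ^^ i) ` ?P" using y unfolding piece_def
    by (simp add: connected_component_refl)
  have sub2: "(f ^^ i) ` ?P \<subseteq> depth_set f U V n"
    using depth_shift connected_component_subset unfolding piece_def by blast
  show ?thesis using connected_component_maximal[OF mem conn sub2] by (simp add: piece_def)
qed

lemma acc_trans:
  assumes hol: "f holomorphic_on U" and UV: "U \<subseteq> V" and yf: "y \<in> filled_set f U"
    and xy: "acc f U V x y" and yz: "acc f U V y z"
  shows "acc f U V x z"
  unfolding acc_def
proof
  fix n
  obtain i where i: "i \<ge> 1" "(f ^^ i) y \<in> piece f U V n z" using yz acc_def by blast
  obtain j where j: "j \<ge> 1" "(f ^^ j) x \<in> piece f U V (n + i) y" using xy acc_def by blast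
  have yd: "y \<in> depth_set f U V (n + i)" using yf UV unfolding filled_set_def depth_set_def by blast
  have "(f ^^ (i + j)) x \<in> piece f U V n ((f ^^ i) y)"
    using piece_map[OF hol yd] j by (auto simp: funpow_add)
  also have "piece f U V n ((f ^^ i) y) = piece f U V n z"
    using i(2) unfolding piece_def by (rule connected_component_eq)
  finally show "\<exists>j\<ge>1. (f ^^ j) x \<in> piece f U V n z" using i by (intro exI[of _ "i+j"]) auto
qed



lemma layers_mono: "i \<le> j \<Longrightarrow> layers_upto f U V i \<subseteq> layers_upto f U V j"
  by (induction j) (auto simp: le_Suc_eq)

lemma layer_sub: "layer f U V k \<subseteq> layers_upto f U V k"
  by (cases k) (auto simp: layer_def)

lemma layers_classes: "layers_upto f U V k \<subseteq> classes f U V"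
  by (induction k) (auto simp: layer0_def minimal_in_def)

lemma layer_minimal: "layer f U V k = minimal_in f U V (classes f U V - (if k = 0 then {} else layers_upto f U V (k - 1)))"
  by (cases k) (auto simp: layer_def layer0_def minimal_in_def cls_le_def)

lemma layer_fresh: "A \<in> layer f U V k \<Longrightarrow> j < k \<Longrightarrow> A \<notin> layers_upto f U V j"
  using layers_mono[of j "k - 1" f U V] by (cases k) (auto simp: layer_def minimal_in_def)

lemma union_layers: "(\<Union>k\<le>M. layer f U V k) = layers_upto f U V M"
  by (induction M) (auto simp: atMost_Suc layer_def)

lemma P2: "A \<in> layer f U V k \<Longrightarrow> B \<in> layer f U V k \<Longrightarrow> A \<noteq> B \<Longrightarrow>
    \<not> cls_acc f U V A B \<and> \<not> cls_acc f U V B A"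
  unfolding layer_minimal minimal_in_def cls_le_def by auto

lemma P3: "s < t \<Longrightarrow> A \<in> layer f U V s \<Longrightarrow> B \<in> layer f U V t \<Longrightarrow> \<not> cls_acc f U V A B"
proof -
  assume st: "s < t" and A: "A \<in> layer f U V s" and B: "B \<in> layer f U V t"
  have Bc: "B \<in> classes f U V" using B layer_sub layers_classes by blast
  have AB: "A \<noteq> B" using layer_fresh[OF B st] A layer_sub by blast
  have "B \<notin> (if s = 0 then {} else layers_upto f U V (s - 1))"
    using layer_fresh[OF B, of "s - 1"] st by auto
  thus ?thesis using A AB Bc unfolding layer_minimal minimal_in_def cls_le_def by auto
qed

lemma P4: "k \<ge> 1 \<Longrightarrow> A \<in> layer f U V k \<Longrightarrow> \<exists>B \<in> layer f U V (k - 1). cls_acc f U V A B"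
proof -
  assume k: "k \<ge> 1" and A: "A \<in> layer f U V k"
  define R :: "nat \<Rightarrow> complex set set" where
    "R = (\<lambda>m. classes f U V - (if m = 0 then {} else layers_upto f U V (m - 1)))"
  have A1: "A \<in> classes f U V" using A layer_sub layers_classes by blast
  have A2: "k - 1 \<noteq> 0 \<Longrightarrow> A \<notin> layers_upto f U V (k - 1 - 1)"
    using layer_fresh[OF A, of "k - 1 - 1"] by auto
  have Ac: "A \<in> R (k - 1)" using A1 A2 unfolding R_def by auto
  have "A \<notin> layer f U V (k - 1)" using layer_fresh[OF A, of "k - 1"] k layer_sub[of f U V "k - 1"] by force
  then obtain B where B: "B \<in> R (k - 1)" "B \<noteq> A" "cls_acc f U V A B"
    using Ac unfolding layer_minimal[of f U V "k - 1"] R_def minimal_in_def cls_le_def by auto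
  show ?thesis
  proof (cases "B \<in> layer f U V (k - 1)")
    case True thus ?thesis using B by blast
  next
    case False
    have "R k = R (k - 1) - layer f U V (k - 1)"
      using k unfolding R_def by (cases "k - 1") (auto simp: layer_def)
    hence "B \<in> R k" using B False by blast
    thus ?thesis using A B unfolding layer_minimal[of f U V k] R_def minimal_in_def cls_le_def by auto
  qed
qed

lemma disj: "disjoint_family_on (layer f U V) S"
  unfolding disjoint_family_on_def
proof (intro ballI impI)
  fix i j :: nat assume "i \<noteq> j"
  have "layer f U V i \<inter> layer f U V j = {}" if "i < j" for i j :: nat
    using layer_fresh[of _ f U V j i] layer_sub[of f U V i] that by blast
  thus "layer f U V i \<inter> layer f U V j = {}" using \<open>i \<noteq> j\<close>
    by (metis inf_commute linorder_neqE_nat)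
qed



locale tr =
  fixes f U V
  assumes T: "\<And>x y z. x \<in> crit f U \<Longrightarrow> y \<in> crit f U \<Longrightarrow> z \<in> crit f U \<Longrightarrow>
      acc f U V x y \<Longrightarrow> acc f U V y z \<Longrightarrow> acc f U V x z"
    and fin: "finite (crit f U)"
begin

lemma sim_trans: "a \<in> crit f U \<Longrightarrow> b \<in> crit f U \<Longrightarrow> c \<in> crit f U \<Longrightarrow>
   crit_sim f U V a b \<Longrightarrow> crit_sim f U V b c \<Longrightarrow> crit_sim f U V a c"
  unfolding crit_sim_def using T by metis

lemma sim_sym: "crit_sim f U V a b \<Longrightarrow> crit_sim f U V b a"
  unfolding crit_sim_def by auto

lemma in_class: "A \<in> classes f U V \<Longrightarrow> x \<in> A \<Longrightarrow> y \<in> A \<Longrightarrow>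
    x \<in> crit f U \<and> y \<in> crit f U \<and> crit_sim f U V x y"
  unfolding classes_def crit_class_def using sim_trans sim_sym by blast

lemma class_of: "A \<in> classes f U V \<Longrightarrow> x \<in> A \<Longrightarrow> A = crit_class f U V x"
  unfolding classes_def crit_class_def using sim_trans sim_sym by blast

lemma lift: "A \<in> classes f U V \<Longrightarrow> B \<in> classes f U V \<Longrightarrow> a \<in> A \<Longrightarrow> b \<in> B \<Longrightarrow>
   a' \<in> A \<Longrightarrow> b' \<in> B \<Longrightarrow> acc f U V a b \<Longrightarrow> acc f U V a' b'"
proof -
  assume h: "A \<in> classes f U V" "B \<in> classes f U V" "a \<in> A" "b \<in> B" "a' \<in> A" "b' \<in> B"
    "acc f U V a b"
  have 1: "crit_sim f U V a' a" "crit_sim f U V b b'" "a \<in> crit f U" "a' \<in> crit f U"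
    "b \<in> crit f U" "b' \<in> crit f U"
    using in_class h by blast+
  have "acc f U V a' b" using 1 h(7) T unfolding crit_sim_def by metis
  thus ?thesis using 1 T unfolding crit_sim_def by metis
qed

lemma cls_antisym: "A \<in> classes f U V \<Longrightarrow> B \<in> classes f U V \<Longrightarrow>
   cls_acc f U V A B \<Longrightarrow> cls_acc f U V B A \<Longrightarrow> A = B"
proof -
  assume h: "A \<in> classes f U V" "B \<in> classes f U V" "cls_acc f U V A B" "cls_acc f U V B A"
  then obtain a b where ab: "a \<in> A" "b \<in> B" "acc f U V a b" unfolding cls_acc_def by blast
  obtain a' b' where ab': "a' \<in> A" "b' \<in> B" "acc f U V b' a'" using h unfolding cls_acc_def by blast
  have "acc f U V b a" using lift[OF h(2) h(1) ab'(2) ab'(1) ab(2) ab(1) ab'(3)] .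
  hence "crit_sim f U V a b" using ab unfolding crit_sim_def by blast
  hence "b \<in> crit_class f U V a" using in_class h ab unfolding crit_class_def by blast
  thus ?thesis using class_of h ab by (metis)
qed

lemma cls_trans: "A \<in> classes f U V \<Longrightarrow> B \<in> classes f U V \<Longrightarrow> C \<in> classes f U V \<Longrightarrow>
   cls_acc f U V A B \<Longrightarrow> cls_acc f U V B C \<Longrightarrow> cls_acc f U V A C"
proof -
  assume h: "A \<in> classes f U V" "B \<in> classes f U V" "C \<in> classes f U V"
    "cls_acc f U V A B" "cls_acc f U V B C"
  then obtain a b where ab: "a \<in> A" "b \<in> B" "acc f U V a b" unfolding cls_acc_def by blast
  obtain b' c where bc: "b' \<in> B" "c \<in> C" "acc f U V b' c" using h unfolding cls_acc_def by blast
  have "acc f U V b c" using lift[OF h(2) h(3) bc(1) bc(2) ab(2) bc(2) bc(3)] .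
  moreover have "a \<in> crit f U" "b \<in> crit f U" "c \<in> crit f U" using in_class h ab bc by blast+
  ultimately have "acc f U V a c" using T ab(3) by blast
  thus ?thesis using ab bc unfolding cls_acc_def by blast
qed

lemma fin_classes: "finite (classes f U V)"
  unfolding classes_def using fin by simp

definition rel where "rel A B \<longleftrightarrow> A \<noteq> B \<and> cls_acc f U V A B"

lemma exists_min:
  assumes R: "R \<subseteq> classes f U V" "R \<noteq> {}"
  shows "\<exists>A\<in>R. \<forall>B\<in>R. B \<noteq> A \<longrightarrow> \<not> cls_acc f U V A B"
proof -
  define m where "m A = card {B \<in> R. rel A B}" for A
  obtain A0 where "A0 \<in> R" using R by blast
  then obtain A where A: "A \<in> R" "\<forall>B. B \<in> R \<longrightarrow> m A \<le> m B"
    using ex_has_least_nat[of "\<lambda>A. A \<in> R" A0 m] by blast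
  show ?thesis
  proof (rule bexI[OF _ A(1)], intro ballI impI notI)
    fix B assume B: "B \<in> R" "B \<noteq> A" "cls_acc f U V A B"
    have finR: "finite R" using R fin_classes finite_subset by blast
    have sub: "{C \<in> R. rel B C} \<subseteq> {C \<in> R. rel A C}"
    proof
      fix C assume C: "C \<in> {C \<in> R. rel B C}"
      have "cls_acc f U V A C" using cls_trans[of A B C] A B C R unfolding rel_def by blast
      moreover have "C \<noteq> A"
      proof
        assume "C = A"
        hence "cls_acc f U V B A" using C unfolding rel_def by blast
        thus False using cls_antisym[of A B] A B R by blast
      qed
      ultimately show "C \<in> {C \<in> R. rel A C}" using C unfolding rel_def by blast
    qed
    have "B \<in> {C \<in> R. rel A C}" "B \<notin> {C \<in> R. rel B C}" using B unfolding rel_def by auto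
    hence "{C \<in> R. rel B C} \<subset> {C \<in> R. rel A C}" using sub by blast
    hence "m B < m A" unfolding m_def using finR by (simp add: psubset_card_mono)
    thus False using A B by force
  qed
qed

lemma growth: "layers_upto f U V k = classes f U V \<or> card (layers_upto f U V k) \<ge> Suc k"
proof (induction k)
  case 0
  show ?case
  proof (cases "classes f U V = {}")
    case True thus ?thesis using layers_classes by blast
  next
    case False
    then obtain A where "A \<in> layer0 f U V"
      using exists_min[of "classes f U V"] unfolding layer0_def by blast
    moreover have "finite (layer0 f U V)" using layers_classes[of f U V 0] fin_classes
      finite_subset by auto
    ultimately have "card (layer0 f U V) > 0" using card_gt_0_iff by blast
    thus ?thesis by simp
  qed
next
  case (Suc k)
  show ?case
  proof (cases "layers_upto f U V k = classes f U V")
    case True thus ?thesis by (simp add: minimal_in_def)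
  next
    case False
    hence ge: "card (layers_upto f U V k) \<ge> Suc k" using Suc.IH by blast
    have "classes f U V - layers_upto f U V k \<noteq> {}" using False layers_classes by blast
    then obtain A where A: "A \<in> minimal_in f U V (classes f U V - layers_upto f U V k)"
      using exists_min[of "classes f U V - layers_upto f U V k"] unfolding minimal_in_def cls_le_def
      by blast
    hence An: "A \<notin> layers_upto f U V k" unfolding minimal_in_def by blast
    have fin2: "finite (layers_upto f U V (Suc k))" using layers_classes[of f U V "Suc k"] fin_classes
      finite_subset by blast
    have "insert A (layers_upto f U V k) \<subseteq> layers_upto f U V (Suc k)" using A by auto
    hence "card (insert A (layers_upto f U V k)) \<le> card (layers_upto f U V (Suc k))"
      using fin2 card_mono by blast
    moreover have "card (insert A (layers_upto f U V k)) = Suc (card (layers_upto f U V k))"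
      using An fin2 finite_subset layers_mono[of k "Suc k" f U V] by (simp)
    ultimately show ?thesis using ge by simp
  qed
qed

lemma P1: "\<exists>M::nat. classes f U V = (\<Union>k\<le>M. layer f U V k) \<and> disjoint_family_on (layer f U V) {..M}"
proof -
  let ?M = "card (classes f U V)"
  have "card (layers_upto f U V ?M) \<le> ?M"
    by (rule card_mono[OF fin_classes layers_classes])
  hence "layers_upto f U V ?M = classes f U V" using growth[of ?M] by linarith
  hence "classes f U V = (\<Union>k\<le>?M. layer f U V k)" by (simp only: union_layers)
  thus ?thesis by (intro exI[of _ ?M] conjI disj)
qed

end

theorem lemma7p1:
  fixes f :: "complex \<Rightarrow> complex" and \<U> \<V> :: "complex set set"
  assumes "setup_map f \<U> \<V>"
  defines "U \<equiv> \<Union>\<U>" and "V \<equiv> \<Union>\<V>"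
  shows "(\<exists>M::nat. classes f U V = (\<Union>k\<le>M. layer f U V k) \<and> disjoint_family_on (layer f U V) {..M})
     \<and> (\<forall>k A B. A \<in> layer f U V k \<and> B \<in> layer f U V k \<and> A \<noteq> B \<longrightarrow>
                  \<not> cls_acc f U V A B \<and> \<not> cls_acc f U V B A)
     \<and> (\<forall>s t A B. s < t \<and> A \<in> layer f U V s \<and> B \<in> layer f U V t \<longrightarrow> \<not> cls_acc f U V A B)
     \<and> (\<forall>k A. k \<ge> 1 \<and> A \<in> layer f U V k \<longrightarrow> (\<exists>B \<in> layer f U V (k - 1). cls_acc f U V A B))"
proof -
  have hol: "f holomorphic_on U" unfolding U_def by (rule sm_hol[OF assms(1)])
  have UV: "U \<subseteq> V" using sm_sub[OF assms(1)] closure_subset[of "\<Union>\<U>"] unfolding U_def V_def by blast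
  have cf: "crit f U \<subseteq> filled_set f U" unfolding U_def by (rule sm_crit[OF assms(1)])
  interpret tr f U V
  proof
    show "finite (crit f U)" using crit_finite[OF assms(1)] unfolding U_def .
  next
    fix x y z assume y: "y \<in> crit f U" and xy: "acc f U V x y" and yz: "acc f U V y z"
    have "y \<in> filled_set f U" using y cf by (rule subsetD[rotated])
    thus "acc f U V x z" by (rule acc_trans[OF hol UV _ xy yz])
  qed
  show ?thesis
  proof (intro conjI)
    show "\<exists>M::nat. classes f U V = (\<Union>k\<le>M. layer f U V k) \<and> disjoint_family_on (layer f U V) {..M}"
      by (rule P1)
    show "\<forall>k A B. A \<in> layer f U V k \<and> B \<in> layer f U V k \<and> A \<noteq> B \<longrightarrow>
                  \<not> cls_acc f U V A B \<and> \<not> cls_acc f U V B A" using P2 by blast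
    show "\<forall>s t A B. s < t \<and> A \<in> layer f U V s \<and> B \<in> layer f U V t \<longrightarrow> \<not> cls_acc f U V A B"
      using P3 by blast
    show "\<forall>k A. k \<ge> 1 \<and> A \<in> layer f U V k \<longrightarrow> (\<exists>B \<in> layer f U V (k - 1). cls_acc f U V A B)"
      using P4 by blast
  qed
qed

end
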